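(* Let $k$ be an integer and let $G$ be a finite graph (parallel edges allowed, no loops) with $\Delta(G)\le k$. Then $\Gamma(G)\le k$ if and only if $2|E(G[U])|\le k(|U|-1)$ for every set $U\subseteq V(G)$ such that $|U|$ is odd, $|U|\ge 3$, and the underlying simple graph of $G[U]$ has no vertices of degree at most one.
   Context: $\Delta(G)$ is the maximum degree of $G$ (counting parallel edges with multiplicity). $G[U]$ is the subgraph induced by $U$, and $|E(G[U])|$ counts edges with multiplicity. $\Gamma(G)=\max\{2|E(G[U])|/(|U|-1): U\subseteq V(G),\ |U|\ge 3,\ |U| \text{ odd}\}$. The underlying simple graph of a graph is obtained by replacing each class of parallel edges by a single edge. *)

theory Defs
  imports "HOL-Analysis.Analysis"
begin

text \<open>A finite multigraph without loops on vertex set V, given by an edge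
  multiplicity function m (m u w = number of parallel edges between u and w).\<close>
definition multigraph :: "'a set \<Rightarrow> ('a \<Rightarrow> 'a \<Rightarrow> nat) \<Rightarrow> bool" where
  "multigraph V m \<longleftrightarrow> finite V \<and> (\<forall>u w. m u w = m w u) \<and> (\<forall>v. m v v = 0)
     \<and> (\<forall>u w. m u w \<noteq> 0 \<longrightarrow> u \<in> V \<and> w \<in> V)"

definition mdegree :: "'a set \<Rightarrow> ('a \<Rightarrow> 'a \<Rightarrow> nat) \<Rightarrow> 'a \<Rightarrow> nat" where
  "mdegree V m v = (\<Sum>u\<in>V. m v u)"

definition max_degree :: "'a set \<Rightarrow> ('a \<Rightarrow> 'a \<Rightarrow> nat) \<Rightarrow> nat" where
  "max_degree V m = Max (insert 0 (mdegree V m ` V))"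

text \<open>|E(G[U])|, counting parallel edges with multiplicity: each edge between distinct
  u,w in U is counted once for the ordered pair (u,w) and once for (w,u).\<close>
definition induced_edges :: "('a \<Rightarrow> 'a \<Rightarrow> nat) \<Rightarrow> 'a set \<Rightarrow> nat" where
  "induced_edges m U = (\<Sum>u\<in>U. \<Sum>w\<in>U. m u w) div 2"

text \<open>\<Gamma>(G) as a supremum in the extended reals (= the maximum when some admissible U
  exists; -\<infinity> by convention otherwise).\<close>
definition Gamma :: "'a set \<Rightarrow> ('a \<Rightarrow> 'a \<Rightarrow> nat) \<Rightarrow> ereal" where
  "Gamma V m = (SUP U\<in>{U. U \<subseteq> V \<and> card U \<ge> 3 \<and> odd (card U)}.
       ereal (2 * real (induced_edges m U) / (real (card U) - 1)))"

definition simple_induced_degree :: "('a \<Rightarrow> 'a \<Rightarrow> nat) \<Rightarrow> 'a set \<Rightarrow> 'a \<Rightarrow> nat" where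
  "simple_induced_degree m U v = card {u\<in>U. m v u \<noteq> 0}"

end

theory Submission
  imports Defs
begin

definition SS :: "('a \<Rightarrow> 'a \<Rightarrow> nat) \<Rightarrow> 'a set \<Rightarrow> nat" where
  "SS m U = (\<Sum>u\<in>U. \<Sum>w\<in>U. m u w)"

lemma SS_insert:
  assumes "finite A" "a \<notin> A" "\<forall>u w. m u w = m w u" "\<forall>v. m v v = 0"
  shows "SS m (insert a A) = SS m A + 2 * (\<Sum>w\<in>A. m a w)"
proof -
  have "SS m (insert a A) = (\<Sum>y\<in>insert a A. m a y) + (\<Sum>x\<in>A. (\<Sum>y\<in>insert a A. m x y))"
    unfolding SS_def using assms by simp
  also have "\<dots> = (\<Sum>y\<in>A. m a y) + (\<Sum>x\<in>A. m x a + (\<Sum>y\<in>A. m x y))"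
    using assms by simp
  also have "\<dots> = (\<Sum>y\<in>A. m a y) + (\<Sum>x\<in>A. m x a) + SS m A"
    unfolding SS_def by (simp add: sum.distrib)
  also have "(\<Sum>x\<in>A. m x a) = (\<Sum>y\<in>A. m a y)" using assms(3) by metis
  finally show ?thesis by simp
qed

lemma main_claim:
  assumes mg: "multigraph V m"
    and kd: "int (max_degree V m) \<le> k"
    and H: "\<forall>U. U \<subseteq> V \<and> odd (card U) \<and> card U \<ge> 3
          \<and> (\<forall>v\<in>U. simple_induced_degree m U v \<ge> 2)
       \<longrightarrow> 2 * int (induced_edges m U) \<le> k * (int (card U) - 1)"
  shows "U \<subseteq> V \<Longrightarrow> odd (card U) \<Longrightarrow> 2 * int (induced_edges m U) \<le> k * (int (card U) - 1)"
proof (induction "card U" arbitrary: U rule: less_induct)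
  case less
  have fV: "finite V" and sym: "\<forall>u w. m u w = m w u" and z: "\<forall>v. m v v = 0"
    using mg unfolding multigraph_def by auto
  have fU: "finite U" using less.prems fV finite_subset by blast
  have degk: "int (mdegree V m x) \<le> k" if "x \<in> V" for x
  proof -
    have "mdegree V m x \<le> max_degree V m" unfolding max_degree_def
      using fV that by (intro Max_ge) auto
    thus ?thesis using kd by linarith
  qed
  have ie: "induced_edges m U = SS m U div 2" for U unfolding induced_edges_def SS_def by simp
  show ?case
  proof (cases "card U = 1")
    case True
    then obtain a where "U = {a}" using card_1_singletonE by blast
    thus ?thesis using z by (simp add: induced_edges_def)
  next
    case False
    have "odd (card U)" using less.prems by simp
    with False have c3: "card U \<ge> 3" by presburger
    show ?thesis
    proof (cases "\<forall>v\<in>U. simple_induced_degree m U v \<ge> 2")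
      case True
      thus ?thesis using H less.prems c3 by blast
    next
      case False
      then obtain v where vU: "v \<in> U" and dv: "card {u\<in>U. m v u \<noteq> 0} \<le> 1"
        unfolding simple_induced_degree_def by force
      obtain u where uU: "u \<in> U" and uv: "u \<noteq> v" and nz: "\<forall>w\<in>U. w \<noteq> u \<longrightarrow> m v w = 0"
      proof (cases "{u\<in>U. m v u \<noteq> 0} = {}")
        case True
        have "card (U - {v}) \<ge> 2" using c3 vU fU by (simp add: card_Diff_singleton)
        hence "U - {v} \<noteq> {}" by (metis card.empty not_numeral_le_zero)
        then obtain u where "u \<in> U" "u \<noteq> v" by blast
        thus ?thesis using that True by blast
      next
        case False
        then obtain u where uin: "u \<in> {u\<in>U. m v u \<noteq> 0}" by blast
        moreover have eqs: "{u\<in>U. m v u \<noteq> 0} = {u}"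
        proof -
          have "finite {u\<in>U. m v u \<noteq> 0}" using fU by simp
          hence "\<forall>a\<in>{u\<in>U. m v u \<noteq> 0}. \<forall>b\<in>{u\<in>U. m v u \<noteq> 0}. a = b"
            using dv card_le_Suc0_iff_eq by (metis One_nat_def)
          thus ?thesis using calculation by blast
        qed
        have a1: "u \<in> U" "m v u \<noteq> 0" using uin by auto
        have a2: "u \<noteq> v" using a1(2) z by auto
        have a3: "\<forall>w\<in>U. w \<noteq> u \<longrightarrow> m v w = 0" using eqs by blast
        show ?thesis using that[OF a1(1) a2 a3] .
      qed
      define T where "T = U - {u, v}"
      have fT: "finite T" using fU T_def by simp
      have Ueq: "U = insert u (insert v T)" using T_def uU vU by auto
      have n1: "u \<notin> insert v T" "v \<notin> T" using uv T_def by auto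
      have cT: "card U = card T + 2" proof -
        have "card (insert v T) = Suc (card T)" using fT n1(2) by (rule card_insert_disjoint)
        moreover have "card (insert u (insert v T)) = Suc (card (insert v T))"
          using fT n1(1) by (intro card_insert_disjoint) auto
        ultimately show ?thesis using Ueq by simp
      qed
      have TV: "T \<subseteq> V" using T_def less.prems by auto
      have oT: "odd (card T)" using cT less.prems by simp
      have IH: "2 * int (induced_edges m T) \<le> k * (int (card T) - 1)"
        using less.hyps[of T] cT TV oT by simp
      have s0: "(\<Sum>w\<in>T. m v w) = 0" using nz T_def by (simp add: sum.neutral)
      have S1: "SS m (insert v T) = SS m T"
        using SS_insert[OF fT n1(2) sym z] s0 by simp
      have S2: "SS m (insert u (insert v T)) = SS m (insert v T) + 2 * (\<Sum>w\<in>insert v T. m u w)"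
        using fT n1(1) sym z by (intro SS_insert) auto
      have SU: "SS m U = SS m T + 2 * (\<Sum>w\<in>insert v T. m u w)"
        using S1 S2 Ueq by simp
      have "(\<Sum>w\<in>insert v T. m u w) \<le> (\<Sum>w\<in>V. m u w)"
        using fV TV less.prems vU by (intro sum_mono2) auto
      moreover have "u \<in> V" using less.prems uU by auto
      ultimately have Yk: "int (\<Sum>w\<in>insert v T. m u w) \<le> k"
        using degk[of u] unfolding mdegree_def by linarith
      have "induced_edges m U = induced_edges m T + (\<Sum>w\<in>insert v T. m u w)"
        unfolding ie SU by simp
      thus ?thesis using IH Yk cT by (simp add: algebra_simps)
    qed
  qed
qed

theorem lemma5:
  fixes V :: "'a set" and m :: "'a \<Rightarrow> 'a \<Rightarrow> nat" and k :: int
  assumes "multigraph V m"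
    and "int (max_degree V m) \<le> k"
  shows "Gamma V m \<le> ereal (real_of_int k) \<longleftrightarrow>
    (\<forall>U. U \<subseteq> V \<and> odd (card U) \<and> card U \<ge> 3
          \<and> (\<forall>v\<in>U. simple_induced_degree m U v \<ge> 2)
       \<longrightarrow> 2 * int (induced_edges m U) \<le> k * (int (card U) - 1))"
proof -
  have eq: "ereal (2 * real (induced_edges m U) / (real (card U) - 1)) \<le> ereal (real_of_int k)
      \<longleftrightarrow> 2 * int (induced_edges m U) \<le> k * (int (card U) - 1)" if "card U \<ge> 3" for U
  proof -
    have p: "real (card U) - 1 > 0" using that by simp
    have "ereal (2 * real (induced_edges m U) / (real (card U) - 1)) \<le> ereal (real_of_int k)
      \<longleftrightarrow> 2 * real (induced_edges m U) \<le> real_of_int k * (real (card U) - 1)"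
      using p by (simp add: pos_divide_le_eq)
    also have "\<dots> \<longleftrightarrow> real_of_int (2 * int (induced_edges m U)) \<le> real_of_int (k * (int (card U) - 1))"
      by simp
    also have "\<dots> \<longleftrightarrow> 2 * int (induced_edges m U) \<le> k * (int (card U) - 1)"
      by (simp only: of_int_le_iff)
    finally show ?thesis .
  qed
  have G: "Gamma V m \<le> ereal (real_of_int k) \<longleftrightarrow>
     (\<forall>U. U \<subseteq> V \<and> card U \<ge> 3 \<and> odd (card U) \<longrightarrow> 2 * int (induced_edges m U) \<le> k * (int (card U) - 1))"
    unfolding Gamma_def SUP_le_iff using eq by auto
  show ?thesis
  proof
    assume "Gamma V m \<le> ereal (real_of_int k)"
    thus "\<forall>U. U \<subseteq> V \<and> odd (card U) \<and> card U \<ge> 3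
          \<and> (\<forall>v\<in>U. simple_induced_degree m U v \<ge> 2)
       \<longrightarrow> 2 * int (induced_edges m U) \<le> k * (int (card U) - 1)" using G by blast
  next
    assume H: "\<forall>U. U \<subseteq> V \<and> odd (card U) \<and> card U \<ge> 3
          \<and> (\<forall>v\<in>U. simple_induced_degree m U v \<ge> 2)
       \<longrightarrow> 2 * int (induced_edges m U) \<le> k * (int (card U) - 1)"
    show "Gamma V m \<le> ereal (real_of_int k)"
      using G main_claim[OF assms H] by blast
  qed
qed

end
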